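(* Let $\eta\in(0,1)$ and $P_A,P_B>0$. The wideband coherent-state MAC with optimal (joint-measurement) reception has capacity region (in nats per second) equal to the set of $(R_1,R_2)$, $R_1,R_2\ge0$, with $$R_1\le\sqrt{\frac{\pi\eta P_A}{3\hbar}},\qquad R_2\le\sqrt{\frac{\pi(1-\eta)P_B}{3\hbar}},\qquad R_1+R_2\le\sqrt{\frac{\pi[\eta P_A+(1-\eta)P_B]}{3\hbar}}.$$
   Context: $g(x)=(x+1)\log(x+1)-x\log x$. Wideband model (continuum limit of frequency bins of width $\Delta=2\pi/T\to0$): Alice and Bob choose photon-number allocations $\bar n_A(\omega),\bar n_B(\omega)\ge0$ on $\omega\in(0,\infty)$ subject to $\int_0^\infty\hbar\omega\,\bar n_A(\omega)\frac{d\omega}{2\pi}\le P_A$ and $\int_0^\infty\hbar\omega\,\bar n_B(\omega)\frac{d\omega}{2\pi}\le P_B$; the transmissivity $\eta$ is frequency independent. For given allocations, the achievable set is $\{R_1\le\int_0^\infty g(\eta\bar n_A(\omega))\frac{d\omega}{2\pi},\ R_2\le\int_0^\infty g((1-\eta)\bar n_B(\omega))\frac{d\omega}{2\pi},\ R_1+R_2\le\int_0^\infty g(\eta\bar n_A(\omega)+(1-\eta)\bar n_B(\omega))\frac{d\omega}{2\pi}\}$ (the per-mode coherent-state MAC capacity region with optimal reception, integrated over frequency). The capacity region is the convex hull of the union of these sets over admissible allocations. Logarithms are natural. *)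

theory Defs
  imports "HOL-Analysis.Analysis"
begin

text \<open>Entropy of a thermal state with mean photon number x (natural logarithm).\<close>
definition g :: "real \<Rightarrow> real" where
  "g x = (x + 1) * ln (x + 1) - x * ln x"

text \<open>Integral over \<omega> \<in> (0,\<infinity>) with measure d\<omega>/(2\<pi>), for nonnegative integrands.\<close>
definition freq_int :: "(real \<Rightarrow> real) \<Rightarrow> ennreal" where
  "freq_int f = (\<integral>\<^sup>+ \<omega> \<in> {0<..}. ennreal (f \<omega> / (2 * pi)) \<partial>lborel)"

definition admissible :: "real \<Rightarrow> real \<Rightarrow> (real \<Rightarrow> real) \<Rightarrow> bool" where
  "admissible hbar P n \<longleftrightarrow>
     n \<in> borel_measurable borel \<and> (\<forall>\<omega>>0. 0 \<le> n \<omega>) \<and>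
     freq_int (\<lambda>\<omega>. hbar * \<omega> * n \<omega>) \<le> ennreal P"

definition achievable :: "real \<Rightarrow> (real \<Rightarrow> real) \<Rightarrow> (real \<Rightarrow> real) \<Rightarrow> (real \<times> real) set" where
  "achievable \<eta> nA nB = {(R1, R2). 0 \<le> R1 \<and> 0 \<le> R2 \<and>
      ennreal R1 \<le> freq_int (\<lambda>\<omega>. g (\<eta> * nA \<omega>)) \<and>
      ennreal R2 \<le> freq_int (\<lambda>\<omega>. g ((1 - \<eta>) * nB \<omega>)) \<and>
      ennreal (R1 + R2) \<le> freq_int (\<lambda>\<omega>. g (\<eta> * nA \<omega> + (1 - \<eta>) * nB \<omega>))}"

definition wideband_MAC_capacity_region ::
  "real \<Rightarrow> real \<Rightarrow> real \<Rightarrow> real \<Rightarrow> (real \<times> real) set" where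
  "wideband_MAC_capacity_region hbar \<eta> PA PB =
     convex hull (\<Union>{achievable \<eta> nA nB | nA nB. admissible hbar PA nA \<and> admissible hbar PB nB})"

end

theory Submission
  imports Defs
begin

lemma I_texp:
  assumes k: "0 < (k::real)"
  shows "(\<integral>\<^sup>+t. ennreal (indicator {0<..} t * (t * exp (-(k*t)))) \<partial>lborel) = ennreal (1 / k^2)"
proof -
  have G2: "Gamma (2::real) = 1"
    using Gamma_plus1[of "1::real"] by simp
  have "ennreal 1 = (\<integral>\<^sup>+t. ennreal (indicator {0..} t * t powr (2 - 1) / exp t) \<partial>lborel)"
    using Gamma_conv_nn_integral_real[of 2] G2 by simp
  also have "\<dots> = ennreal k * (\<integral>\<^sup>+t. ennreal (indicator {0..} (0 + k*t) * (0 + k*t) powr (2 - 1) / exp (0 + k*t)) \<partial>lborel)"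
    using nn_integral_real_affine[of "\<lambda>t. ennreal (indicator {0..} t * t powr (2 - 1) / exp t)" k 0] k
    by simp
  also have "(\<lambda>t. ennreal (indicator {0..} (0 + k*t) * (0 + k*t) powr (2 - 1) / exp (0 + k*t)))
      = (\<lambda>t. ennreal k * ennreal (indicator {0<..} t * (t * exp (-(k*t)))))"
  proof
    fix t :: real
    show "ennreal (indicator {0..} (0 + k*t) * (0 + k*t) powr (2 - 1) / exp (0 + k*t)) =
        ennreal k * ennreal (indicator {0<..} t * (t * exp (-(k*t))))"
      using k by (cases "t > 0"; cases "t = 0")
        (auto simp: indicator_def zero_le_mult_iff exp_minus field_simps ennreal_mult[symmetric])
  qed
  also have "(\<integral>\<^sup>+t. ennreal k * ennreal (indicator {0<..} t * (t * exp (-(k*t)))) \<partial>lborel)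
     = ennreal k * (\<integral>\<^sup>+t. ennreal (indicator {0<..} t * (t * exp (-(k*t)))) \<partial>lborel)"
    by (rule nn_integral_cmult) measurable
  finally have "ennreal 1 = ennreal (k*k) * (\<integral>\<^sup>+t. ennreal (indicator {0<..} t * (t * exp (-(k*t)))) \<partial>lborel)" (is "_ = _ * ?X")
    using k by (simp add: ennreal_mult mult.assoc)
  then have X: "ennreal (k*k) * ?X = 1" by simp
  have "ennreal (1/(k*k)) * ennreal (k*k) = 1" using k by (simp flip: ennreal_mult)
  then have "?X = (ennreal (1/(k*k)) * ennreal (k*k)) * ?X" by simp
  also have "\<dots> = ennreal (1/(k*k))" using X by (simp only: mult.assoc) simp
  finally show ?thesis by (simp add: power2_eq_square)
qed

lemma I_exp:
  assumes k: "0 < (k::real)"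
  shows "(\<integral>\<^sup>+t. ennreal (indicator {0<..} t * exp (-(k*t))) \<partial>lborel) = ennreal (1 / k)"
proof -
  have "(\<integral>\<^sup>+t. ennreal (indicator {0..} t * exp (-k*t)) \<partial>lborel) = ennreal (exp (-k*0) / k)"
    by (rule nn_integral_has_integral_lebesgue[OF _ has_integral_exp_minus_to_infinity[OF k]]) simp
  moreover have "(\<integral>\<^sup>+t. ennreal (indicator {0..} t * exp (-k*t)) \<partial>lborel)
     = (\<integral>\<^sup>+t. ennreal (indicator {0<..} t * exp (-(k*t))) \<partial>lborel)"
    by (rule nn_integral_cong_AE) (use AE_lborel_singleton[of 0] in \<open>auto simp: indicator_def elim!: eventually_mono\<close>)
  ultimately show ?thesis by simp
qed

lemma basel_enn:
  assumes "0 \<le> (c::real)"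
  shows "(\<Sum>n. ennreal (c / (real n + 1)^2)) = ennreal (c * pi^2 / 6)"
proof -
  have i: "(\<lambda>n. 1 / (real n + 1)^2) sums (pi^2/6)"
    by (rule iffD1[OF sums_cong inverse_squares_sums]) (simp add: add.commute)
  have "(\<lambda>n. c / (real n + 1)^2) sums (c * pi^2/6)"
    using sums_mult[OF i, of c] by simp
  then show ?thesis by (rule suminf_ennreal_eq[rotated]) (use assms in simp)
qed

lemma series_texp:
  assumes k: "0 < (k::real)" and w: "0 < w"
  shows "(\<lambda>n. w * exp (-((real n + 1) * k * w))) sums (w / (exp (k*w) - 1))"
proof -
  define q where "q = exp (-(k*w))"
  have q: "0 < q" "q < 1" using k w by (auto simp: q_def)
  have "(\<lambda>n. (w*q) * q^n) sums ((w*q) * (1/(1-q)))"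
    by (rule sums_mult, rule geometric_sums) (use q in simp)
  moreover have "(w*q) * q^n = w * exp (-((real n + 1) * k * w))" for n
  proof -
    have "exp (-((real n + 1) * k * w)) = exp (real (Suc n) * (-(k*w)))"
      by (simp add: algebra_simps)
    also have "\<dots> = q ^ Suc n" unfolding q_def by (rule exp_of_nat_mult)
    finally show ?thesis by simp
  qed
  moreover have "(w*q) * (1/(1-q)) = w / (exp (k*w) - 1)"
  proof -
    have qE: "q = 1 / exp (k*w)" by (simp add: q_def exp_minus field_simps)
    have "exp (k*w) > 1" using k w by simp
    then show ?thesis unfolding qE by (simp add: field_simps)
  qed
  ultimately show ?thesis by simp
qed

lemma series_log:
  assumes k: "0 < (k::real)" and w: "0 < w"
  shows "(\<lambda>n. exp (-((real n + 1) * k * w)) / (real n + 1)) sums (- ln (1 - exp (-(k*w))))"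
proof -
  define q where "q = exp (-(k*w))"
  have q: "0 < q" "q < 1" using k w by (auto simp: q_def)
  have sg: "summable (\<lambda>n. q ^ Suc n)"
    using summable_mult[OF summable_geometric[of q], of q] q by simp
  have S: "summable (\<lambda>n. q ^ Suc n / (real n + 1))"
    by (rule summable_comparison_test[OF _ sg]) (use q in \<open>auto intro!: exI[of _ 0] simp: divide_le_eq\<close>)
  have "ln (1 - q) = (\<Sum>n. (-1)^n * (1 / real (n + 1)) * ((1 - q) - 1)^(Suc n))"
    by (rule ln_series) (use q in auto)
  also have "(\<lambda>n. (-1)^n * (1 / real (n + 1)) * ((1 - q) - 1)^(Suc n)) = (\<lambda>n. - (q ^ Suc n / (real n + 1)))"
  proof
    fix n
    have m: "(-1::real)^n * (-q)^n = q^n" by (simp flip: power_mult_distrib)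
    have "(-1)^n * (1 / real (n + 1)) * ((1 - q) - 1)^(Suc n) = (1 / real (n + 1)) * ((-1)^n * (-q)^n) * (-q)"
      by (simp add: power_Suc ac_simps)
    also have "\<dots> = (1 / real (n + 1)) * q^n * (-q)" by (simp only: m)
    also have "\<dots> = - (q ^ Suc n / (real n + 1))" by (simp add: power_Suc field_simps)
    finally show "(-1)^n * (1 / real (n + 1)) * ((1 - q) - 1)^(Suc n) = - (q ^ Suc n / (real n + 1))" .
  qed
  also have "(\<Sum>n. - (q ^ Suc n / (real n + 1))) = - (\<Sum>n. q ^ Suc n / (real n + 1))"
    by (rule suminf_minus[OF S])
  finally have "(\<lambda>n. q ^ Suc n / (real n + 1)) sums (- ln (1 - q))"
    using summable_sums[OF S] by simp
  moreover have "q ^ Suc n = exp (-((real n + 1) * k * w))" for n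
  proof -
    have "exp (-((real n + 1) * k * w)) = exp (real (Suc n) * (-(k*w)))"
      by (simp add: algebra_simps)
    also have "\<dots> = q ^ Suc n" unfolding q_def by (rule exp_of_nat_mult)
    finally show ?thesis by simp
  qed
  ultimately show ?thesis by (simp add: q_def)
qed

lemma I_bose:
  assumes k: "0 < (k::real)"
  shows "(\<integral>\<^sup>+w. ennreal (indicator {0<..} w * (w / (exp (k*w) - 1))) \<partial>lborel) = ennreal (pi^2 / (6 * k^2))"
proof -
  have "(\<integral>\<^sup>+w. ennreal (indicator {0<..} w * (w / (exp (k*w) - 1))) \<partial>lborel)
      = (\<integral>\<^sup>+w. (\<Sum>n. ennreal (indicator {0<..} w * (w * exp (-((real n + 1) * k * w))))) \<partial>lborel)"
  proof (rule nn_integral_cong)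
    fix w :: real
    show "ennreal (indicator {0<..} w * (w / (exp (k*w) - 1))) = (\<Sum>n. ennreal (indicator {0<..} w * (w * exp (-((real n + 1) * k * w)))))"
    proof (cases "w > 0")
      case True
      then show ?thesis using series_texp[OF k True]
        by (intro suminf_ennreal_eq[symmetric]) auto
    next
      case False
      then show ?thesis by simp
    qed
  qed
  also have "\<dots> = (\<Sum>n. (\<integral>\<^sup>+w. ennreal (indicator {0<..} w * (w * exp (-((real n + 1) * k * w)))) \<partial>lborel))"
    by (rule nn_integral_suminf) measurable
  also have "\<dots> = (\<Sum>n. ennreal ((1/k^2) / (real n + 1)^2))"
  proof (rule suminf_cong)
    fix n
    have "(real n + 1) * k > 0" using k by simp
    from I_texp[OF this] show "(\<integral>\<^sup>+w. ennreal (indicator {0<..} w * (w * exp (-((real n + 1) * k * w)))) \<partial>lborel) = ennreal ((1/k^2) / (real n + 1)^2)"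
      by (simp add: power_mult_distrib mult.assoc)
  qed
  also have "\<dots> = ennreal (pi^2 / (6 * k^2))" by (subst basel_enn) auto
  finally show ?thesis .
qed

lemma I_log:
  assumes k: "0 < (k::real)"
  shows "(\<integral>\<^sup>+w. ennreal (indicator {0<..} w * (- ln (1 - exp (-(k*w))))) \<partial>lborel) = ennreal (pi^2 / (6 * k))"
proof -
  have "(\<integral>\<^sup>+w. ennreal (indicator {0<..} w * (- ln (1 - exp (-(k*w))))) \<partial>lborel)
      = (\<integral>\<^sup>+w. (\<Sum>n. ennreal (1 / (real n + 1)) * ennreal (indicator {0<..} w * exp (-((real n + 1) * k * w)))) \<partial>lborel)"
  proof (rule nn_integral_cong)
    fix w :: real
    show "ennreal (indicator {0<..} w * (- ln (1 - exp (-(k*w))))) = (\<Sum>n. ennreal (1 / (real n + 1)) * ennreal (indicator {0<..} w * exp (-((real n + 1) * k * w))))"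
    proof (cases "w > 0")
      case True
      then show ?thesis using series_log[OF k True]
        by (subst suminf_ennreal_eq[symmetric]) (auto simp flip: ennreal_mult)
    next
      case False
      then show ?thesis by simp
    qed
  qed
  also have "\<dots> = (\<Sum>n. (\<integral>\<^sup>+w. ennreal (1 / (real n + 1)) * ennreal (indicator {0<..} w * exp (-((real n + 1) * k * w))) \<partial>lborel))"
    by (rule nn_integral_suminf) measurable
  also have "\<dots> = (\<Sum>n. ennreal ((1/k) / (real n + 1)^2))"
  proof (rule suminf_cong)
    fix n
    have "(real n + 1) * k > 0" using k by simp
    from I_exp[OF this] show "(\<integral>\<^sup>+w. ennreal (1 / (real n + 1)) * ennreal (indicator {0<..} w * exp (-((real n + 1) * k * w))) \<partial>lborel) = ennreal ((1/k) / (real n + 1)^2)"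
    proof (subst nn_integral_cmult)
      assume I: "(\<integral>\<^sup>+t. ennreal (indicator {0<..} t * exp (-((real n + 1) * k * t))) \<partial>lborel) = ennreal (1 / ((real n + 1) * k))"
      have "ennreal (1 / (real n + 1)) * ennreal (1 / ((real n + 1) * k)) = ennreal (1 / (real n + 1) * (1 / ((real n + 1) * k)))"
        by (rule ennreal_mult[symmetric]) (use k in auto)
      also have "1 / (real n + 1) * (1 / ((real n + 1) * k)) = (1/k) / (real n + 1)^2"
        by (simp add: power2_eq_square field_simps)
      finally show "ennreal (1 / (real n + 1)) * (\<integral>\<^sup>+t. ennreal (indicator {0<..} t * exp (-((real n + 1) * k * t))) \<partial>lborel) = ennreal ((1/k) / (real n + 1)^2)"
        using I by simp
    qed measurable
  qed
  also have "\<dots> = ennreal (pi^2 / (6 * k))" by (subst basel_enn) (use k in \<open>auto simp: mult.commute\<close>)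
  finally show ?thesis .
qed

lemma g_meas[measurable]: "g \<in> borel_measurable borel"
  unfolding g_def by measurable

lemma g_zero[simp]: "g 0 = 0" by (simp add: g_def)

lemma g_nonneg: assumes "0 \<le> x" shows "0 \<le> g x"
proof (cases "x = 0")
  case False
  then have x: "0 < x" using assms by simp
  have "x * ln x \<le> x * ln (x+1)" using x by (intro mult_left_mono) auto
  also have "\<dots> \<le> (x+1) * ln (x+1)" using x by (intro mult_right_mono) auto
  finally show ?thesis by (simp add: g_def)
qed simp

lemma g_le:
  assumes x: "0 \<le> x" and c: "0 < c"
  shows "g x \<le> - ln (1 - exp (-c)) + c * x"
proof -
  define q where "q = exp (-c)"
  have q: "0 < q" "q < 1" using c by (auto simp: q_def)
  show ?thesis
  proof (cases "x = 0")
    case True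
    have "ln (1 - q) \<le> 0" using q by simp
    then show ?thesis using True by (simp add: q_def)
  next
    case False
    then have x: "0 < x" using x by simp
    have a: "ln (q*(x+1)/x) \<le> q*(x+1)/x - 1" by (rule ln_le_minus_one) (use q x in simp)
    have 1: "x * ln (q*(x+1)/x) \<le> q*(x+1) - x"
    proof -
      have "x * ln (q*(x+1)/x) \<le> x * (q*(x+1)/x - 1)" using a x by (intro mult_left_mono) auto
      also have "\<dots> = q*(x+1) - x" using x by (simp add: field_simps)
      finally show ?thesis .
    qed
    have 2: "ln ((1-q)*(x+1)) \<le> (1-q)*(x+1) - 1" by (rule ln_le_minus_one) (use q x in simp)
    have e1: "ln (q*(x+1)/x) = -c + ln (x+1) - ln x"
      using q x by (simp add: ln_div ln_mult q_def)
    have e2: "ln ((1-q)*(x+1)) = ln (1-q) + ln (x+1)"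
      using q x by (simp add: ln_mult)
    have "g x - c*x + ln (1-q) = x * ln (q*(x+1)/x) + ln ((1-q)*(x+1))"
      unfolding e1 e2 g_def by (simp add: algebra_simps)
    also have "\<dots> \<le> 0" using 1 2 by (simp add: algebra_simps)
    finally show ?thesis by (simp add: q_def)
  qed
qed

lemma g_thermal:
  assumes c: "0 < c"
  shows "g (1 / (exp c - 1)) = - ln (1 - exp (-c)) + c * (1 / (exp c - 1))"
proof -
  define E where "E = exp c - 1"
  have E: "0 < E" using c by (simp add: E_def)
  have m1: "1 / E + 1 = exp c / E" using E by (simp add: E_def field_simps)
  have l1: "ln (1 / E + 1) = c - ln E" using E by (simp add: m1 ln_div)
  have l2: "ln (1 / E) = - ln E" using E by (simp add: ln_div)
  have l3: "1 - exp (-c) = E / exp c" by (simp add: E_def field_simps exp_minus)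
  have l4: "ln (1 - exp (-c)) = ln E - c" using E by (simp add: l3 ln_div)
  show ?thesis unfolding g_def E_def[symmetric] l1 l2 l4 by (simp add: algebra_simps)
qed

lemma g_subadd:
  assumes x: "0 \<le> x" and y: "0 \<le> y"
  shows "g (x + y) \<le> g x + g y"
proof (cases "x = 0 \<or> y = 0")
  case True then show ?thesis using g_nonneg[OF x] g_nonneg[OF y] by (elim disjE) simp_all
next
  case False
  then have x: "0 < x" and y: "0 < y" using x y by auto
  define A where "A = x*(x+y+1)/((x+y)*(x+1))"
  define B where "B = y*(x+y+1)/((x+y)*(y+1))"
  define D where "D = (x+y+1)/((x+1)*(y+1))"
  have pos: "0 < A" "0 < B" "0 < D" using x y by (auto simp: A_def B_def D_def)
  have eA: "ln A = ln x + ln (x+y+1) - ln (x+y) - ln (x+1)"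
    using x y by (simp add: A_def ln_div ln_mult)
  have eB: "ln B = ln y + ln (x+y+1) - ln (x+y) - ln (y+1)"
    using x y by (simp add: B_def ln_div ln_mult)
  have eD: "ln D = ln (x+y+1) - ln (x+1) - ln (y+1)"
    using x y by (simp add: D_def ln_div ln_mult)
  have d1: "(x+y)*(x+1) \<noteq> 0" and d2: "(x+y)*(y+1) \<noteq> 0" and d3: "(x+1)*(y+1) \<noteq> 0"
    using x y by auto
  have nA: "x*(x+y+1) - (x+y)*(x+1) = -y" by (simp add: algebra_simps)
  have nB: "y*(x+y+1) - (x+y)*(y+1) = -x" by (simp add: algebra_simps)
  have nD: "(x+y+1) - (x+1)*(y+1) = -(x*y)" by (simp add: algebra_simps)
  have "A - 1 = (x*(x+y+1) - (x+y)*(x+1)) / ((x+y)*(x+1))"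
    using d1 unfolding A_def by (simp add: diff_divide_distrib)
  then have A1: "x * (A - 1) = - (x*y/((x+y)*(x+1)))" unfolding nA by simp
  have "B - 1 = (y*(x+y+1) - (x+y)*(y+1)) / ((x+y)*(y+1))"
    using d2 unfolding B_def by (simp add: diff_divide_distrib)
  then have B1: "y * (B - 1) = - (x*y/((x+y)*(y+1)))" unfolding nB by simp
  have "D - 1 = ((x+y+1) - (x+1)*(y+1)) / ((x+1)*(y+1))"
    using d3 unfolding D_def by (simp add: diff_divide_distrib)
  then have D1: "D - 1 = - (x*y/((x+1)*(y+1)))" unfolding nD by simp
  have "g (x+y) - g x - g y = x * ln A + y * ln B + ln D"
    unfolding eA eB eD g_def by (simp add: algebra_simps)
  also have "\<dots> \<le> x * (A - 1) + y * (B - 1) + (D - 1)"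
    using pos x y ln_le_minus_one[of A] ln_le_minus_one[of B] ln_le_minus_one[of D]
    by (intro add_mono mult_left_mono) auto
  also have "x * (A - 1) + y * (B - 1) + (D - 1) = - (x*y/((x+y)*(x+1))) + - (x*y/((x+y)*(y+1))) + - (x*y/((x+1)*(y+1)))"
    using A1 B1 D1 by simp
  also have "- (x*y/((x+y)*(x+1))) + - (x*y/((x+y)*(y+1))) + - (x*y/((x+1)*(y+1))) \<le> 0"
  proof -
    have "0 \<le> x*y/((x+y)*(x+1))" "0 \<le> x*y/((x+y)*(y+1))" "0 \<le> x*y/((x+1)*(y+1))"
      using x y by auto
    then show ?thesis by linarith
  qed
  finally show ?thesis by simp
qed

lemma freq_int_alt:
  assumes [measurable]: "f \<in> borel_measurable borel"
  shows "freq_int f = ennreal (1/(2*pi)) * (\<integral>\<^sup>+\<omega>. ennreal (indicator {0<..} \<omega> * f \<omega>) \<partial>lborel)"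
proof -
  have "freq_int f = (\<integral>\<^sup>+\<omega>. ennreal (1/(2*pi)) * ennreal (indicator {0<..} \<omega> * f \<omega>) \<partial>lborel)"
    unfolding freq_int_def
  proof (intro nn_integral_cong)
    fix \<omega> :: real
    show "ennreal (f \<omega> / (2 * pi)) * indicator {0<..} \<omega> = ennreal (1/(2*pi)) * ennreal (indicator {0<..} \<omega> * f \<omega>)"
    proof (cases "0 < \<omega>")
      case True
      have "ennreal (f \<omega> / (2 * pi)) = ennreal (1/(2*pi) * f \<omega>)" by simp
      also have "\<dots> = ennreal (1/(2*pi)) * ennreal (f \<omega>)" by (rule ennreal_mult') simp
      finally show ?thesis using True by simp
    qed simp
  qed
  then show ?thesis by (simp add: nn_integral_cmult)
qed

lemma freq_int_mono:
  assumes "\<And>\<omega>. 0 < \<omega> \<Longrightarrow> f \<omega> \<le> h \<omega>"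
  shows "freq_int f \<le> freq_int h"
  unfolding freq_int_def
  by (intro nn_integral_mono) (auto simp: indicator_def assms intro!: ennreal_leI divide_right_mono)

lemma freq_int_cong:
  assumes "\<And>\<omega>. 0 < \<omega> \<Longrightarrow> f \<omega> = h \<omega>"
  shows "freq_int f = freq_int h"
  unfolding freq_int_def
  by (intro nn_integral_cong) (auto simp: indicator_def assms)

lemma freq_int_add:
  assumes [measurable]: "f \<in> borel_measurable borel" "h \<in> borel_measurable borel"
    and f0: "\<And>\<omega>. 0 < \<omega> \<Longrightarrow> 0 \<le> f \<omega>" and h0: "\<And>\<omega>. 0 < \<omega> \<Longrightarrow> 0 \<le> h \<omega>"
  shows "freq_int (\<lambda>\<omega>. f \<omega> + h \<omega>) = freq_int f + freq_int h"
proof -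
  have "freq_int (\<lambda>\<omega>. f \<omega> + h \<omega>) = (\<integral>\<^sup>+\<omega>. ennreal (f \<omega> / (2 * pi)) * indicator {0<..} \<omega> + ennreal (h \<omega> / (2 * pi)) * indicator {0<..} \<omega> \<partial>lborel)"
    unfolding freq_int_def
  proof (intro nn_integral_cong)
    fix \<omega> :: real
    show "ennreal ((f \<omega> + h \<omega>) / (2 * pi)) * indicator {0<..} \<omega> = ennreal (f \<omega> / (2 * pi)) * indicator {0<..} \<omega> + ennreal (h \<omega> / (2 * pi)) * indicator {0<..} \<omega>"
    proof (cases "0 < \<omega>")
      case True
      then show ?thesis using f0[OF True] h0[OF True] by (simp add: add_divide_distrib)
    qed simp
  qed
  also have "\<dots> = freq_int f + freq_int h"
    unfolding freq_int_def by (rule nn_integral_add) measurable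
  finally show ?thesis .
qed

lemma freq_int_cmult:
  assumes [measurable]: "f \<in> borel_measurable borel" and c: "0 \<le> c"
  shows "freq_int (\<lambda>\<omega>. c * f \<omega>) = ennreal c * freq_int f"
proof -
  have "freq_int (\<lambda>\<omega>. c * f \<omega>) = (\<integral>\<^sup>+\<omega>. ennreal c * (ennreal (f \<omega> / (2 * pi)) * indicator {0<..} \<omega>) \<partial>lborel)"
    unfolding freq_int_def
  proof (intro nn_integral_cong)
    fix \<omega> :: real
    have "ennreal (c * f \<omega> / (2 * pi)) = ennreal (c * (f \<omega> / (2 * pi)))" by simp
    also have "\<dots> = ennreal c * ennreal (f \<omega> / (2 * pi))" by (rule ennreal_mult'[OF c])
    finally show "ennreal (c * f \<omega> / (2 * pi)) * indicator {0<..} \<omega> = ennreal c * (ennreal (f \<omega> / (2 * pi)) * indicator {0<..} \<omega>)"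
      by (simp add: mult.assoc)
  qed
  also have "\<dots> = ennreal c * freq_int f"
    unfolding freq_int_def by (rule nn_integral_cmult) measurable
  finally show ?thesis .
qed

definition thermal :: "real \<Rightarrow> real \<Rightarrow> real" where
  "thermal k \<omega> = 1 / (exp (k * \<omega>) - 1)"

lemma thermal_meas[measurable]: "thermal k \<in> borel_measurable borel"
  unfolding thermal_def by measurable

lemma thermal_pos: "0 < k \<Longrightarrow> 0 < \<omega> \<Longrightarrow> 0 < thermal k \<omega>"
  unfolding thermal_def by simp

lemma FL:
  assumes k: "0 < k"
  shows "freq_int (\<lambda>\<omega>. - ln (1 - exp (-(k*\<omega>)))) = ennreal (pi / (12 * k))"
proof -
  have "freq_int (\<lambda>\<omega>. - ln (1 - exp (-(k*\<omega>)))) = ennreal (1/(2*pi)) * ennreal (pi^2 / (6 * k))"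
    using freq_int_alt[of "\<lambda>\<omega>. - ln (1 - exp (-(k*\<omega>)))"] I_log[OF k] by simp
  also have "\<dots> = ennreal (1/(2*pi) * (pi^2 / (6 * k)))" by (rule ennreal_mult'[symmetric]) simp
  also have "1/(2*pi) * (pi^2 / (6 * k)) = pi / (12 * k)" by (simp add: power2_eq_square field_simps)
  finally show ?thesis .
qed

lemma FW:
  assumes k: "0 < k"
  shows "freq_int (\<lambda>\<omega>. \<omega> / (exp (k*\<omega>) - 1)) = ennreal (pi / (12 * k^2))"
proof -
  have "freq_int (\<lambda>\<omega>. \<omega> / (exp (k*\<omega>) - 1)) = ennreal (1/(2*pi)) * ennreal (pi^2 / (6 * k^2))"
    using freq_int_alt[of "\<lambda>\<omega>. \<omega> / (exp (k*\<omega>) - 1)"] I_bose[OF k] by simp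
  also have "\<dots> = ennreal (1/(2*pi) * (pi^2 / (6 * k^2)))" by (rule ennreal_mult'[symmetric]) simp
  also have "1/(2*pi) * (pi^2 / (6 * k^2)) = pi / (12 * k^2)" by (simp add: power2_eq_square field_simps)
  finally show ?thesis .
qed

lemma FP:
  assumes k: "0 < k" and h: "0 < hbar"
  shows "freq_int (\<lambda>\<omega>. hbar * \<omega> * thermal k \<omega>) = ennreal (hbar * pi / (12 * k^2))"
proof -
  have "freq_int (\<lambda>\<omega>. hbar * \<omega> * thermal k \<omega>) = freq_int (\<lambda>\<omega>. hbar * (\<omega> / (exp (k*\<omega>) - 1)))"
    by (rule freq_int_cong) (simp add: thermal_def)
  also have "\<dots> = ennreal hbar * ennreal (pi / (12 * k^2))"
    using h by (subst freq_int_cmult) (simp_all add: FW[OF k])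
  also have "\<dots> = ennreal (hbar * (pi / (12 * k^2)))" by (rule ennreal_mult'[symmetric]) (use h in simp)
  finally show ?thesis by simp
qed

lemma FG:
  assumes k: "0 < k"
  shows "freq_int (\<lambda>\<omega>. g (thermal k \<omega>)) = ennreal (pi / (6 * k))"
proof -
  have "freq_int (\<lambda>\<omega>. g (thermal k \<omega>)) = freq_int (\<lambda>\<omega>. - ln (1 - exp (-(k*\<omega>))) + k * (\<omega> / (exp (k*\<omega>) - 1)))"
  proof (rule freq_int_cong)
    fix \<omega> :: real assume w: "0 < \<omega>"
    have "0 < k * \<omega>" using k w by simp
    from g_thermal[OF this] show "g (thermal k \<omega>) = - ln (1 - exp (-(k*\<omega>))) + k * (\<omega> / (exp (k*\<omega>) - 1))"
      by (simp add: thermal_def)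
  qed
  also have "\<dots> = freq_int (\<lambda>\<omega>. - ln (1 - exp (-(k*\<omega>)))) + freq_int (\<lambda>\<omega>. k * (\<omega> / (exp (k*\<omega>) - 1)))"
  proof (rule freq_int_add)
    fix \<omega> :: real assume w: "0 < \<omega>"
    have "0 < exp (-(k*\<omega>))" "exp (-(k*\<omega>)) < 1" using k w by auto
    then show "0 \<le> - ln (1 - exp (-(k*\<omega>)))" by simp
    show "0 \<le> k * (\<omega> / (exp (k*\<omega>) - 1))" using k w by simp
  qed measurable
  also have "\<dots> = ennreal (pi / (12 * k)) + ennreal k * ennreal (pi / (12 * k^2))"
    using k FL[OF k] FW[OF k] freq_int_cmult[of "\<lambda>\<omega>. \<omega> / (exp (k*\<omega>) - 1)" k] by simp
  also have "\<dots> = ennreal (pi / (12 * k)) + ennreal (k * (pi / (12 * k^2)))"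
    using k ennreal_mult'[of k "pi / (12 * k^2)"] by simp
  also have "\<dots> = ennreal (pi / (12 * k) + k * (pi / (12 * k^2)))"
    by (rule ennreal_plus[symmetric]) (use k in simp_all)
  also have "pi / (12 * k) + k * (pi / (12 * k^2)) = pi / (6 * k)"
    using k by (simp add: power2_eq_square field_simps)
  finally show ?thesis .
qed

definition kP :: "real \<Rightarrow> real \<Rightarrow> real" where
  "kP hbar P = sqrt (hbar * pi / (12 * P))"

definition Cap :: "real \<Rightarrow> real \<Rightarrow> real" where
  "Cap hbar P = sqrt (pi * P / (3 * hbar))"

lemma kP_facts:
  assumes h: "0 < hbar" and P: "0 < P"
  shows "0 < kP hbar P" "hbar * pi / (12 * (kP hbar P)^2) = P"
    "pi / (6 * kP hbar P) = Cap hbar P"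
    "pi / (12 * kP hbar P) + kP hbar P / hbar * P = Cap hbar P"
proof -
  define k where "k = kP hbar P"
  have k: "0 < k" using h P by (simp add: k_def kP_def)
  have k2: "k^2 = hbar * pi / (12 * P)" using h P by (simp add: k_def kP_def)
  show "0 < kP hbar P" using k by (simp add: k_def)
  show "hbar * pi / (12 * (kP hbar P)^2) = P"
    unfolding k_def[symmetric] k2 using h P by (simp add: field_simps)
  have c: "pi / (6 * k) = Cap hbar P"
    unfolding Cap_def
  proof (rule real_sqrt_unique[symmetric])
    have "(pi / (6 * k))^2 = pi^2 / (36 * k^2)" by (simp add: power2_eq_square)
    also have "\<dots> = pi * P / (3 * hbar)" unfolding k2 using h P by (simp add: power2_eq_square field_simps)
    finally show "(pi / (6 * k))^2 = pi * P / (3 * hbar)" .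
    show "0 \<le> pi / (6 * k)" using k by simp
  qed
  then show "pi / (6 * kP hbar P) = Cap hbar P" by (simp add: k_def)
  have "pi / (12 * k) + k / hbar * P = pi / (6 * k)"
  proof -
    have "k / hbar * P = k^2 * P / (hbar * k)" using k by (simp add: power2_eq_square)
    also have "\<dots> = pi / (12 * k)" unfolding k2 using h P k by (simp add: field_simps)
    finally show ?thesis by simp
  qed
  then show "pi / (12 * kP hbar P) + kP hbar P / hbar * P = Cap hbar P" using c by (simp add: k_def)
qed

lemma Cap_nonneg: "0 < hbar \<Longrightarrow> 0 \<le> P \<Longrightarrow> 0 \<le> Cap hbar P"
  by (simp add: Cap_def)

lemma UB:
  assumes h: "0 < hbar" and P: "0 < P" and [measurable]: "n \<in> borel_measurable borel"
    and n0: "\<And>\<omega>. 0 < \<omega> \<Longrightarrow> 0 \<le> n \<omega>"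
    and pow: "freq_int (\<lambda>\<omega>. hbar * \<omega> * n \<omega>) \<le> ennreal P"
  shows "freq_int (\<lambda>\<omega>. g (n \<omega>)) \<le> ennreal (Cap hbar P)"
proof -
  define k where "k = kP hbar P"
  have k: "0 < k" using kP_facts[OF h P] by (simp add: k_def)
  have b: "0 \<le> k / hbar" using k h by simp
  have "freq_int (\<lambda>\<omega>. g (n \<omega>)) \<le> freq_int (\<lambda>\<omega>. - ln (1 - exp (-(k*\<omega>))) + k / hbar * (hbar * \<omega> * n \<omega>))"
  proof (rule freq_int_mono)
    fix \<omega> :: real assume w: "0 < \<omega>"
    have "g (n \<omega>) \<le> - ln (1 - exp (-(k*\<omega>))) + (k*\<omega>) * n \<omega>"
      by (rule g_le) (use n0[OF w] k w in simp_all)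
    also have "(k*\<omega>) * n \<omega> = k / hbar * (hbar * \<omega> * n \<omega>)" using h by simp
    finally show "g (n \<omega>) \<le> - ln (1 - exp (-(k*\<omega>))) + k / hbar * (hbar * \<omega> * n \<omega>)" .
  qed
  also have "\<dots> = freq_int (\<lambda>\<omega>. - ln (1 - exp (-(k*\<omega>)))) + freq_int (\<lambda>\<omega>. k / hbar * (hbar * \<omega> * n \<omega>))"
  proof (rule freq_int_add)
    fix \<omega> :: real assume w: "0 < \<omega>"
    have "0 < exp (-(k*\<omega>))" "exp (-(k*\<omega>)) < 1" using k w by auto
    then show "0 \<le> - ln (1 - exp (-(k*\<omega>)))" by simp
    show "0 \<le> k / hbar * (hbar * \<omega> * n \<omega>)" using k h w n0[OF w] by simp
  qed measurable
  also have "freq_int (\<lambda>\<omega>. k / hbar * (hbar * \<omega> * n \<omega>)) = ennreal (k / hbar) * freq_int (\<lambda>\<omega>. hbar * \<omega> * n \<omega>)"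
    by (rule freq_int_cmult[OF _ b]) measurable
  also have "freq_int (\<lambda>\<omega>. - ln (1 - exp (-(k*\<omega>)))) = ennreal (pi / (12 * k))" by (rule FL[OF k])
  also have "ennreal (pi / (12 * k)) + ennreal (k / hbar) * freq_int (\<lambda>\<omega>. hbar * \<omega> * n \<omega>)
      \<le> ennreal (pi / (12 * k)) + ennreal (k / hbar) * ennreal P"
    by (intro add_left_mono mult_left_mono pow) simp
  also have "\<dots> = ennreal (pi / (12 * k)) + ennreal (k / hbar * P)"
    using ennreal_mult'[OF b, of P] by simp
  also have "\<dots> = ennreal (pi / (12 * k) + k / hbar * P)"
    by (rule ennreal_plus[symmetric]) (use k h P in simp_all)
  also have "pi / (12 * k) + k / hbar * P = Cap hbar P" using kP_facts[OF h P] by (simp add: k_def)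
  finally show ?thesis .
qed

lemma thermal_mono:
  assumes "0 < k2" "k2 \<le> k1" "0 < \<omega>"
  shows "thermal k1 \<omega> \<le> thermal k2 \<omega>"
proof -
  have "exp (k2 * \<omega>) \<le> exp (k1 * \<omega>)" using assms by (simp add: mult_right_mono)
  moreover have "1 < exp (k2 * \<omega>)" using assms by simp
  ultimately show ?thesis unfolding thermal_def by (intro divide_left_mono) auto
qed

lemma kP_anti:
  assumes h: "0 < hbar" and "0 < P1" "P1 \<le> P2"
  shows "kP hbar P2 \<le> kP hbar P1"
  unfolding kP_def using assms by (intro real_sqrt_le_mono divide_left_mono) auto

lemma ennreal_sub_le:
  assumes "ennreal a \<le> ennreal b + F" "0 \<le> b"
  shows "ennreal (a - b) \<le> F"
proof (cases F)
  case (real f)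
  then have "ennreal a \<le> ennreal (b + f)" using assms by simp
  then have "a \<le> b + f \<or> a \<le> 0" unfolding ennreal_le_iff2 by blast
  then show ?thesis using real assms(2) by (auto intro: ennreal_leI)
qed simp

lemma corner:
  assumes h: "0 < hbar" and P1: "0 < P1" and P2: "0 < P2"
  defines "N1 \<equiv> thermal (kP hbar P1)" and "N2 \<equiv> thermal (kP hbar (P1 + P2))"
  shows "\<And>\<omega>. 0 < \<omega> \<Longrightarrow> N1 \<omega> \<le> N2 \<omega>"
    and "freq_int (\<lambda>\<omega>. hbar * \<omega> * (N2 \<omega> - N1 \<omega>)) = ennreal P2"
    and "ennreal (Cap hbar (P1 + P2) - Cap hbar P1) \<le> freq_int (\<lambda>\<omega>. g (N2 \<omega> - N1 \<omega>))"
    and "freq_int (\<lambda>\<omega>. hbar * \<omega> * N1 \<omega>) = ennreal P1"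
    and "freq_int (\<lambda>\<omega>. g (N1 \<omega>)) = ennreal (Cap hbar P1)"
    and "freq_int (\<lambda>\<omega>. hbar * \<omega> * N2 \<omega>) = ennreal (P1 + P2)"
    and "freq_int (\<lambda>\<omega>. g (N2 \<omega>)) = ennreal (Cap hbar (P1 + P2))"
proof -
  have P12: "0 < P1 + P2" using P1 P2 by simp
  note f1 = kP_facts[OF h P1] and f2 = kP_facts[OF h P12]
  show mono: "N1 \<omega> \<le> N2 \<omega>" if "0 < \<omega>" for \<omega>
    unfolding N1_def N2_def by (rule thermal_mono) (use f2 kP_anti[OF h P1, of "P1+P2"] P2 that in auto)
  show pw1: "freq_int (\<lambda>\<omega>. hbar * \<omega> * N1 \<omega>) = ennreal P1"
    unfolding N1_def using FP[OF f1(1) h] f1(2) by simp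
  show pw2: "freq_int (\<lambda>\<omega>. hbar * \<omega> * N2 \<omega>) = ennreal (P1 + P2)"
    unfolding N2_def using FP[OF f2(1) h] f2(2) by simp
  show G1: "freq_int (\<lambda>\<omega>. g (N1 \<omega>)) = ennreal (Cap hbar P1)"
    unfolding N1_def using FG[OF f1(1)] f1(3) by simp
  show G2: "freq_int (\<lambda>\<omega>. g (N2 \<omega>)) = ennreal (Cap hbar (P1 + P2))"
    unfolding N2_def using FG[OF f2(1)] f2(3) by simp
  have N1pos: "0 \<le> N1 \<omega>" if "0 < \<omega>" for \<omega>
    unfolding N1_def using thermal_pos[OF f1(1) that] by simp
  have meas[measurable]: "N1 \<in> borel_measurable borel" "N2 \<in> borel_measurable borel"
    unfolding N1_def N2_def by measurable
  have "freq_int (\<lambda>\<omega>. hbar * \<omega> * N2 \<omega>) = freq_int (\<lambda>\<omega>. hbar * \<omega> * N1 \<omega> + hbar * \<omega> * (N2 \<omega> - N1 \<omega>))"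
    by (rule freq_int_cong) (simp add: algebra_simps)
  also have "\<dots> = freq_int (\<lambda>\<omega>. hbar * \<omega> * N1 \<omega>) + freq_int (\<lambda>\<omega>. hbar * \<omega> * (N2 \<omega> - N1 \<omega>))"
    by (rule freq_int_add) (use h mono N1pos in \<open>auto intro!: mult_nonneg_nonneg\<close>)
  finally have "ennreal P1 + ennreal P2 = ennreal P1 + freq_int (\<lambda>\<omega>. hbar * \<omega> * (N2 \<omega> - N1 \<omega>))"
    using pw1 pw2 P1 P2 by simp
  then show "freq_int (\<lambda>\<omega>. hbar * \<omega> * (N2 \<omega> - N1 \<omega>)) = ennreal P2"
    by (simp add: ennreal_add_left_cancel)
  have "freq_int (\<lambda>\<omega>. g (N2 \<omega>)) \<le> freq_int (\<lambda>\<omega>. g (N1 \<omega>) + g (N2 \<omega> - N1 \<omega>))"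
  proof (rule freq_int_mono)
    fix \<omega> :: real assume w: "0 < \<omega>"
    have "g (N1 \<omega> + (N2 \<omega> - N1 \<omega>)) \<le> g (N1 \<omega>) + g (N2 \<omega> - N1 \<omega>)"
      by (rule g_subadd) (use N1pos[OF w] mono[OF w] in simp_all)
    then show "g (N2 \<omega>) \<le> g (N1 \<omega>) + g (N2 \<omega> - N1 \<omega>)" by simp
  qed
  also have "\<dots> = freq_int (\<lambda>\<omega>. g (N1 \<omega>)) + freq_int (\<lambda>\<omega>. g (N2 \<omega> - N1 \<omega>))"
    by (rule freq_int_add) (use mono N1pos g_nonneg in \<open>auto\<close>)
  finally have "ennreal (Cap hbar (P1 + P2)) \<le> ennreal (Cap hbar P1) + freq_int (\<lambda>\<omega>. g (N2 \<omega> - N1 \<omega>))"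
    using G1 G2 by simp
  then show "ennreal (Cap hbar (P1 + P2) - Cap hbar P1) \<le> freq_int (\<lambda>\<omega>. g (N2 \<omega> - N1 \<omega>))"
    by (rule ennreal_sub_le) (rule Cap_nonneg[OF h P1[THEN less_imp_le]])
qed

lemma Cap_sum_le:
  assumes h: "0 < hbar" "0 \<le> P1" "0 \<le> P2"
  shows "Cap hbar (P1 + P2) \<le> Cap hbar P1 + Cap hbar P2"
proof -
  have "pi * (P1 + P2) / (3 * hbar) = pi * P1 / (3 * hbar) + pi * P2 / (3 * hbar)"
    by (simp add: add_divide_distrib distrib_left)
  then show ?thesis unfolding Cap_def using assms
    by (simp only:) (rule sqrt_add_le_add_sqrt, simp_all)
qed

lemma Cap_mono:
  assumes h: "0 < hbar" "P1 \<le> P2"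
  shows "Cap hbar P1 \<le> Cap hbar P2"
  unfolding Cap_def using assms by (intro real_sqrt_le_mono divide_right_mono mult_left_mono) auto

lemma power_scale:
  assumes adm: "admissible hbar P n" and c: "0 \<le> c"
  shows "freq_int (\<lambda>\<omega>. hbar * \<omega> * (c * n \<omega>)) \<le> ennreal (c * P)"
proof -
  have [measurable]: "n \<in> borel_measurable borel" and pw: "freq_int (\<lambda>\<omega>. hbar * \<omega> * n \<omega>) \<le> ennreal P"
    using adm by (auto simp: admissible_def)
  have "freq_int (\<lambda>\<omega>. hbar * \<omega> * (c * n \<omega>)) = freq_int (\<lambda>\<omega>. c * (hbar * \<omega> * n \<omega>))"
    by (rule freq_int_cong) (simp add: algebra_simps)
  also have "\<dots> = ennreal c * freq_int (\<lambda>\<omega>. hbar * \<omega> * n \<omega>)"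
    by (rule freq_int_cmult[OF _ c]) measurable
  also have "\<dots> \<le> ennreal c * ennreal P" by (intro mult_left_mono pw) simp
  also have "\<dots> = ennreal (c * P)" by (rule ennreal_mult'[symmetric, OF c])
  finally show ?thesis .
qed

lemma rect_in:
  assumes "ennreal X \<le> freq_int (\<lambda>\<omega>. g (\<eta> * nA \<omega>))"
    and "ennreal Y \<le> freq_int (\<lambda>\<omega>. g ((1 - \<eta>) * nB \<omega>))"
    and "ennreal S \<le> freq_int (\<lambda>\<omega>. g (\<eta> * nA \<omega> + (1 - \<eta>) * nB \<omega>))"
    and "0 \<le> x" "x \<le> X" "0 \<le> y" "y \<le> Y" "x + y \<le> S"
  shows "(x, y) \<in> achievable \<eta> nA nB"
  unfolding achievable_def using assms
  by (auto intro: order_trans[OF ennreal_leI] simp del: ennreal_plus)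

lemma admissible_thermal:
  assumes h: "0 < hbar" and c: "0 < c" and P: "0 < P"
    and N[measurable]: "N \<in> borel_measurable borel" and N0: "\<And>\<omega>. 0 < \<omega> \<Longrightarrow> 0 \<le> N \<omega>"
    and pw: "freq_int (\<lambda>\<omega>. hbar * \<omega> * N \<omega>) = ennreal (c * P)"
  shows "admissible hbar P (\<lambda>\<omega>. N \<omega> / c)"
proof -
  have "freq_int (\<lambda>\<omega>. hbar * \<omega> * (N \<omega> / c)) = freq_int (\<lambda>\<omega>. (1/c) * (hbar * \<omega> * N \<omega>))"
    by (rule freq_int_cong) (simp add: field_simps)
  also have "\<dots> = ennreal (1/c) * ennreal (c * P)"
    by (subst freq_int_cmult) (use c pw in simp_all)
  also have "\<dots> = ennreal (1/c * (c * P))" by (rule ennreal_mult'[symmetric]) (use c in simp)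
  also have "1/c * (c * P) = P" using c by simp
  finally show ?thesis unfolding admissible_def using N0 c by auto
qed

theorem mainTheorem7:
  fixes hbar \<eta> PA PB :: real
  assumes "0 < hbar" and "0 < \<eta>" and "\<eta> < 1" and "0 < PA" and "0 < PB"
  shows "wideband_MAC_capacity_region hbar \<eta> PA PB =
    {(R1, R2). 0 \<le> R1 \<and> 0 \<le> R2 \<and>
       R1 \<le> sqrt (pi * \<eta> * PA / (3 * hbar)) \<and>
       R2 \<le> sqrt (pi * (1 - \<eta>) * PB / (3 * hbar)) \<and>
       R1 + R2 \<le> sqrt (pi * (\<eta> * PA + (1 - \<eta>) * PB) / (3 * hbar))}"
proof -
  note h = \<open>0 < hbar\<close> and et = \<open>0 < \<eta>\<close> \<open>\<eta> < 1\<close> and PA = \<open>0 < PA\<close> and PB = \<open>0 < PB\<close>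
  define QA where "QA = \<eta> * PA"
  define QB where "QB = (1 - \<eta>) * PB"
  have QA: "0 < QA" and QB: "0 < QB" using et PA PB by (auto simp: QA_def QB_def)
  define a where "a = Cap hbar QA"
  define b where "b = Cap hbar QB"
  define s where "s = Cap hbar (QA + QB)"
  have ea: "sqrt (pi * \<eta> * PA / (3 * hbar)) = a" by (simp add: a_def Cap_def QA_def mult.assoc)
  have eb: "sqrt (pi * (1 - \<eta>) * PB / (3 * hbar)) = b" by (simp add: b_def Cap_def QB_def mult.assoc)
  have es: "sqrt (pi * (\<eta> * PA + (1 - \<eta>) * PB) / (3 * hbar)) = s" by (simp add: s_def Cap_def QA_def QB_def)
  define T where "T = {(R1, R2). 0 \<le> R1 \<and> 0 \<le> R2 \<and> R1 \<le> a \<and> R2 \<le> b \<and> R1 + R2 \<le> s}"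
  define U where "U = \<Union>{achievable \<eta> nA nB | nA nB. admissible hbar PA nA \<and> admissible hbar PB nB}"
  have goal: "convex hull U = T"
  proof
    show "convex hull U \<subseteq> T"
    proof (rule hull_minimal)
      show "U \<subseteq> T"
      proof
        fix p assume "p \<in> U"
        then obtain nA nB where adA: "admissible hbar PA nA" and adB: "admissible hbar PB nB"
          and p: "p \<in> achievable \<eta> nA nB" unfolding U_def by blast
        obtain R1 R2 where pe: "p = (R1, R2)" by (cases p)
        have [measurable]: "nA \<in> borel_measurable borel" "nB \<in> borel_measurable borel"
          and nA0: "\<And>\<omega>. 0 < \<omega> \<Longrightarrow> 0 \<le> nA \<omega>" and nB0: "\<And>\<omega>. 0 < \<omega> \<Longrightarrow> 0 \<le> nB \<omega>"
          using adA adB by (auto simp: admissible_def)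
        have R: "0 \<le> R1" "0 \<le> R2" "ennreal R1 \<le> freq_int (\<lambda>\<omega>. g (\<eta> * nA \<omega>))"
          "ennreal R2 \<le> freq_int (\<lambda>\<omega>. g ((1 - \<eta>) * nB \<omega>))"
          "ennreal (R1 + R2) \<le> freq_int (\<lambda>\<omega>. g (\<eta> * nA \<omega> + (1 - \<eta>) * nB \<omega>))"
          using p unfolding pe achievable_def by auto
        have pA: "freq_int (\<lambda>\<omega>. hbar * \<omega> * (\<eta> * nA \<omega>)) \<le> ennreal QA"
          unfolding QA_def by (rule power_scale[OF adA]) (use et in simp)
        have pB: "freq_int (\<lambda>\<omega>. hbar * \<omega> * ((1 - \<eta>) * nB \<omega>)) \<le> ennreal QB"
          unfolding QB_def by (rule power_scale[OF adB]) (use et in simp)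
        have "freq_int (\<lambda>\<omega>. g (\<eta> * nA \<omega>)) \<le> ennreal a"
          unfolding a_def by (rule UB[OF h QA _ _ pA]) (use nA0 et in simp_all)
        with R(1,3) have "ennreal (R1) \<le> ennreal a" by (blast intro: order_trans)
        then have r1: "R1 \<le> a"
          by (rule ennreal_le_iff[THEN iffD1, rotated]) (use Cap_nonneg[OF h, of QA] QA QB in \<open>simp add: a_def\<close>)
        have "freq_int (\<lambda>\<omega>. g ((1 - \<eta>) * nB \<omega>)) \<le> ennreal b"
          unfolding b_def by (rule UB[OF h QB _ _ pB]) (use nB0 et in simp_all)
        with R(2,4) have "ennreal (R2) \<le> ennreal b" by (blast intro: order_trans)
        then have r2: "R2 \<le> b"
          by (rule ennreal_le_iff[THEN iffD1, rotated]) (use Cap_nonneg[OF h, of QB] QA QB in \<open>simp add: b_def\<close>)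
        have "freq_int (\<lambda>\<omega>. hbar * \<omega> * (\<eta> * nA \<omega> + (1 - \<eta>) * nB \<omega>))
            = freq_int (\<lambda>\<omega>. hbar * \<omega> * (\<eta> * nA \<omega>) + hbar * \<omega> * ((1 - \<eta>) * nB \<omega>))"
          by (rule freq_int_cong) (simp add: algebra_simps)
        also have "\<dots> = freq_int (\<lambda>\<omega>. hbar * \<omega> * (\<eta> * nA \<omega>)) + freq_int (\<lambda>\<omega>. hbar * \<omega> * ((1 - \<eta>) * nB \<omega>))"
          by (rule freq_int_add) (use h et nA0 nB0 in simp_all)
        also have "\<dots> \<le> ennreal QA + ennreal QB" by (rule add_mono[OF pA pB])
        also have "\<dots> = ennreal (QA + QB)" using QA QB by simp
        finally have pS: "freq_int (\<lambda>\<omega>. hbar * \<omega> * (\<eta> * nA \<omega> + (1 - \<eta>) * nB \<omega>)) \<le> ennreal (QA + QB)" .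
        have "freq_int (\<lambda>\<omega>. g (\<eta> * nA \<omega> + (1 - \<eta>) * nB \<omega>)) \<le> ennreal s"
          unfolding s_def by (rule UB[OF h _ _ _ pS]) (use QA QB nA0 nB0 et in simp_all)
        with R(1,2,5) have "ennreal (R1 + R2) \<le> ennreal s" by (blast intro: order_trans)
        then have r3: "R1 + R2 \<le> s"
          by (rule ennreal_le_iff[THEN iffD1, rotated]) (use Cap_nonneg[OF h, of "QA + QB"] QA QB in \<open>simp add: s_def\<close>)
        show "p \<in> T" unfolding pe T_def using R(1,2) r1 r2 r3 by simp
      qed
      show "convex T"
      proof (rule convexI)
        fix p q :: "real \<times> real" and u v :: real
        assume p: "p \<in> T" and q: "q \<in> T" and uv: "0 \<le> u" "0 \<le> v" "u + v = 1"
        obtain x1 y1 where pe: "p = (x1, y1)" by (cases p)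
        obtain x2 y2 where qe: "q = (x2, y2)" by (cases q)
        have A: "0 \<le> x1" "0 \<le> y1" "x1 \<le> a" "y1 \<le> b" "x1 + y1 \<le> s"
          "0 \<le> x2" "0 \<le> y2" "x2 \<le> a" "y2 \<le> b" "x2 + y2 \<le> s"
          using p q unfolding pe qe T_def by auto
        have m: "u * x1 \<le> u * a" "v * x2 \<le> v * a" "u * y1 \<le> u * b" "v * y2 \<le> v * b"
          "u * (x1 + y1) \<le> u * s" "v * (x2 + y2) \<le> v * s"
          using A uv by (auto intro: mult_left_mono)
        have n: "0 \<le> u * x1" "0 \<le> v * x2" "0 \<le> u * y1" "0 \<le> v * y2"
          using A uv by auto
        have e: "u * a + v * a = a" "u * b + v * b = b" "u * s + v * s = s"
          using uv(3) by (metis distrib_right mult_1)+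
        have d: "u * (x1 + y1) = u * x1 + u * y1" "v * (x2 + y2) = v * x2 + v * y2"
          by (simp_all add: distrib_left)
        have "0 \<le> u * x1 + v * x2 \<and> 0 \<le> u * y1 + v * y2 \<and> u * x1 + v * x2 \<le> a \<and>
              u * y1 + v * y2 \<le> b \<and> u * x1 + v * x2 + (u * y1 + v * y2) \<le> s"
          using m n e d by linarith
        then show "u *\<^sub>R p + v *\<^sub>R q \<in> T" unfolding pe qe T_def by simp
      qed
    qed
  next
    show "T \<subseteq> convex hull U"
    proof -
      define N1 where "N1 = thermal (kP hbar QA)"
      define N2 where "N2 = thermal (kP hbar (QA + QB))"
      note c1 = corner[OF h QA QB, folded N1_def N2_def]
      have [measurable]: "N1 \<in> borel_measurable borel" "N2 \<in> borel_measurable borel"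
        unfolding N1_def N2_def by measurable
      have N1pos: "\<And>\<omega>. 0 < \<omega> \<Longrightarrow> 0 \<le> N1 \<omega>"
        unfolding N1_def using thermal_pos kP_facts(1)[OF h QA] by (simp add: less_imp_le)
      define nA1 where "nA1 = (\<lambda>\<omega>. N1 \<omega> / \<eta>)"
      define nB1 where "nB1 = (\<lambda>\<omega>. (N2 \<omega> - N1 \<omega>) / (1 - \<eta>))"
      have adA1: "admissible hbar PA nA1" unfolding nA1_def
        by (rule admissible_thermal[OF h et(1) PA]) (use N1pos c1(4) in \<open>simp_all add: QA_def\<close>)
      have adB1: "admissible hbar PB nB1" unfolding nB1_def
        by (rule admissible_thermal[OF h _ PB]) (use et c1(1) c1(2) in \<open>simp_all add: QB_def\<close>)
      have e1: "(\<lambda>\<omega>. g (\<eta> * nA1 \<omega>)) = (\<lambda>\<omega>. g (N1 \<omega>))"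
        "(\<lambda>\<omega>. g ((1 - \<eta>) * nB1 \<omega>)) = (\<lambda>\<omega>. g (N2 \<omega> - N1 \<omega>))"
        "(\<lambda>\<omega>. g (\<eta> * nA1 \<omega> + (1 - \<eta>) * nB1 \<omega>)) = (\<lambda>\<omega>. g (N2 \<omega>))"
        using et by (auto simp: nA1_def nB1_def)
      have rect1: "(x, y) \<in> U" if "0 \<le> x" "x \<le> a" "0 \<le> y" "y \<le> s - a" "x + y \<le> s" for x y
      proof -
        have "(x, y) \<in> achievable \<eta> nA1 nB1"
          by (rule rect_in[where X=a and Y="s - a" and S=s]) (use that c1 in \<open>simp_all add: e1 a_def s_def\<close>)
        then show ?thesis unfolding U_def using adA1 adB1 by blast
      qed
      define M1 where "M1 = thermal (kP hbar QB)"
      define M2 where "M2 = thermal (kP hbar (QB + QA))"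
      note c2 = corner[OF h QB QA, folded M1_def M2_def]
      have [measurable]: "M1 \<in> borel_measurable borel" "M2 \<in> borel_measurable borel"
        unfolding M1_def M2_def by measurable
      have M1pos: "\<And>\<omega>. 0 < \<omega> \<Longrightarrow> 0 \<le> M1 \<omega>"
        unfolding M1_def using thermal_pos kP_facts(1)[OF h QB] by (simp add: less_imp_le)
      define nA2 where "nA2 = (\<lambda>\<omega>. (M2 \<omega> - M1 \<omega>) / \<eta>)"
      define nB2 where "nB2 = (\<lambda>\<omega>. M1 \<omega> / (1 - \<eta>))"
      have adA2: "admissible hbar PA nA2" unfolding nA2_def
        by (rule admissible_thermal[OF h et(1) PA]) (use c2(1) c2(2) in \<open>simp_all add: QA_def\<close>)
      have adB2: "admissible hbar PB nB2" unfolding nB2_def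
        by (rule admissible_thermal[OF h _ PB]) (use et M1pos c2(4) in \<open>simp_all add: QB_def\<close>)
      have e2: "(\<lambda>\<omega>. g (\<eta> * nA2 \<omega>)) = (\<lambda>\<omega>. g (M2 \<omega> - M1 \<omega>))"
        "(\<lambda>\<omega>. g ((1 - \<eta>) * nB2 \<omega>)) = (\<lambda>\<omega>. g (M1 \<omega>))"
        "(\<lambda>\<omega>. g (\<eta> * nA2 \<omega> + (1 - \<eta>) * nB2 \<omega>)) = (\<lambda>\<omega>. g (M2 \<omega>))"
        using et by (auto simp: nA2_def nB2_def)
      have sc: "Cap hbar (QB + QA) = s" by (simp add: s_def add.commute)
      have rect2: "(x, y) \<in> U" if "0 \<le> x" "x \<le> s - b" "0 \<le> y" "y \<le> b" "x + y \<le> s" for x y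
      proof -
        have "(x, y) \<in> achievable \<eta> nA2 nB2"
          by (rule rect_in[where X="s - b" and Y=b and S=s]) (use that c2 sc in \<open>simp_all add: e2 b_def\<close>)
        then show ?thesis unfolding U_def using adA2 adB2 by blast
      qed
      have sa: "a \<le> s" unfolding a_def s_def by (rule Cap_mono) (use h QB in auto)
      have sb: "b \<le> s" unfolding b_def s_def by (rule Cap_mono) (use h QA in auto)
      have abs: "s \<le> a + b" unfolding a_def b_def s_def by (rule Cap_sum_le) (use h QA QB in auto)
      have a0: "0 \<le> a" unfolding a_def by (rule Cap_nonneg) (use h QA in auto)
      have b0: "0 \<le> b" unfolding b_def by (rule Cap_nonneg) (use h QB in auto)
      show ?thesis
      proof
        fix p assume "p \<in> T"
        then obtain x y where pe: "p = (x, y)" and A: "0 \<le> x" "0 \<le> y" "x \<le> a" "y \<le> b" "x + y \<le> s"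
          unfolding T_def by auto
        show "p \<in> convex hull U"
        proof (cases "y \<le> s - a \<or> x \<le> s - b")
          case True
          then have "p \<in> U" unfolding pe using rect1 rect2 A by auto
          then show ?thesis by (rule hull_inc)
        next
          case False
          define d where "d = a + b - s"
          define u where "u = x - (s - b)"
          define v where "v = y - (s - a)"
          have u: "0 < u" and v: "0 < v" and uv: "u + v \<le> d"
            using False A by (auto simp: u_def v_def d_def)
          have d: "0 < d" using u v uv by simp
          have in0: "(s - b, s - a) \<in> U" by (rule rect1) (use sa sb abs a0 b0 in auto)
          have in1: "(a, s - a) \<in> U" by (rule rect1) (use sa a0 in auto)
          have in2: "(s - b, b) \<in> U" by (rule rect2) (use sb b0 in auto)
          have sub: "convex hull {(s - b, s - a), (a, s - a), (s - b, b)} \<subseteq> convex hull U"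
            by (rule hull_mono) (use in0 in1 in2 in auto)
          define \<alpha> where "\<alpha> = u / d"
          define \<beta> where "\<beta> = v / d"
          have \<alpha>d: "\<alpha> * d = u" and \<beta>d: "\<beta> * d = v" using d by (simp_all add: \<alpha>_def \<beta>_def)
          have hx: "(1 - \<alpha> - \<beta>) * (s - b) + \<alpha> * a + \<beta> * (s - b) = x"
          proof -
            have "(1 - \<alpha> - \<beta>) * (s - b) + \<alpha> * a + \<beta> * (s - b) = (s - b) + \<alpha> * d"
              unfolding d_def by (simp add: algebra_simps)
            then show ?thesis using \<alpha>d by (simp add: u_def)
          qed
          have hy: "(1 - \<alpha> - \<beta>) * (s - a) + \<alpha> * (s - a) + \<beta> * b = y"
          proof -
            have "(1 - \<alpha> - \<beta>) * (s - a) + \<alpha> * (s - a) + \<beta> * b = (s - a) + \<beta> * d"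
              unfolding d_def by (simp add: algebra_simps)
            then show ?thesis using \<beta>d by (simp add: v_def)
          qed
          have "p = (1 - \<alpha> - \<beta>) *\<^sub>R (s - b, s - a) + \<alpha> *\<^sub>R (a, s - a) + \<beta> *\<^sub>R (s - b, b)"
            unfolding pe hx[symmetric] hy[symmetric] by simp
          moreover have "0 \<le> 1 - \<alpha> - \<beta>"
          proof -
            have "u/d + v/d \<le> 1" using uv d by (simp add: add_divide_distrib[symmetric])
            then show ?thesis by (simp add: \<alpha>_def \<beta>_def)
          qed
          moreover have "0 \<le> \<alpha>" "0 \<le> \<beta>" using u v d by (simp_all add: \<alpha>_def \<beta>_def)
          ultimately have "p \<in> convex hull {(s - b, s - a), (a, s - a), (s - b, b)}"
            unfolding convex_hull_3
            by (intro CollectI exI[of _ "1 - \<alpha> - \<beta>"] exI[of _ "\<alpha>"] exI[of _ "\<beta>"]) auto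
          then show ?thesis using sub by blast
        qed
      qed
    qed
  qed
  show ?thesis
    unfolding wideband_MAC_capacity_region_def ea eb es U_def[symmetric] goal T_def ..
qed

end
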